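(* Let $Q\in\mathbb{R}^{n\times n}$ be symmetric nonsingular with eigenvalues $\lambda_1\ge\dots\ge\lambda_{n-1}>0>\lambda_n$ and orthonormal eigenvectors $u_1,\dots,u_n$ ($Qu_i=\lambda_iu_i$), let $\mathcal{C_L}=\{x: x^TQx\le0,\ x^TQu_n\le0\}$, and let $A\in\mathbb{R}^{n\times n}$. Then $\mathcal{C_L}$ is an invariant set for the discrete system $x_{k+1}=Ax_k$ (i.e., $A\mathcal{C_L}\subseteq\mathcal{C_L}$) if and only if there exists $\mu\ge0$ such that $$A^TQA-\mu Q\preceq0,\qquad u_n^TAu_n\ge0,\qquad u_n^TAQ^{-1}A^Tu_n\le0.$$ The same conditions characterize invariance of $-\mathcal{C_L}$.
   Context: $\preceq0$ denotes negative semidefiniteness. *)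

theory Defs
  imports "HOL-Analysis.Analysis"
begin

definition neg_semidef :: "real^'n^'n \<Rightarrow> bool" where
  "neg_semidef M \<longleftrightarrow> (\<forall>x::real^'n. x \<bullet> (M *v x) \<le> 0)"

definition CL :: "real^'n^'n \<Rightarrow> real^'n \<Rightarrow> (real^'n) set" where
  "CL Q un = {x. x \<bullet> (Q *v x) \<le> 0 \<and> x \<bullet> (Q *v un) \<le> 0}"

definition dinvariant :: "real^'n^'n \<Rightarrow> (real^'n) set \<Rightarrow> bool" where
  "dinvariant A S \<longleftrightarrow> (\<forall>x\<in>S. A *v x \<in> S)"

end

theory Submission imports Defs begin

lemma qf_expand:
  fixes M :: "real^'n^'n"
  assumes sM: "transpose M = M"
  shows "(x + t *\<^sub>R y) \<bullet> (M *v (x + t *\<^sub>R y)) = x \<bullet> (M *v x) + 2 * t * (x \<bullet> (M *v y)) + t^2 * (y \<bullet> (M *v y))"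
proof -
  have sym: "y \<bullet> (M *v x) = x \<bullet> (M *v y)"
    by (metis dot_lmul_matrix inner_commute sM transpose_matrix_vector)
  show ?thesis
    by (simp add: matrix_vector_right_distrib matrix_vector_mult_scaleR inner_add_left inner_add_right sym power2_eq_square algebra_simps)
qed

lemma matinv_right:
  fixes Q :: "real^'n^'n"
  assumes "invertible Q" shows "Q ** matrix_inv Q = mat 1"
  using assms unfolding invertible_def matrix_inv_def by (metis (mono_tags, lifting) someI_ex)

lemma diff_scale_mv: fixes M Q :: "real^'n^'n"
  shows "(M - c *\<^sub>R Q) *v x = M *v x - c *\<^sub>R (Q *v x)"
  by (simp add: matrix_vector_mult_def vec_eq_iff sum_subtractf sum_distrib_left algebra_simps)


lemma quad_contra:
  fixes al be ga t1 t2 :: real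
  assumes "al > 0" "ga > 0" "t1 < 0" "0 < t2"
    and h1: "ga + 2 * t1 * be' + t1^2 * al \<le> 0" and h2: "ga + 2 * t2 * be' + t2^2 * al \<le> 0"
  shows False
proof -
  define be where "be = 2 * be'"
  have "al * t1^2 + be * t1 + ga \<le> 0" "al * t2^2 + be * t2 + ga \<le> 0" using h1 h2 unfolding be_def by (simp_all add: algebra_simps)
  note assms = assms this
  have a: "t2 * (al * t1^2 + be * t1 + ga) \<le> 0" using assms by (simp add: mult_nonneg_nonpos)
  have b: "(-t1) * (al * t2^2 + be * t2 + ga) \<le> 0" using assms by (intro mult_nonneg_nonpos) auto
  have id: "t2 * (al * t1^2 + be * t1 + ga) + (-t1) * (al * t2^2 + be * t2 + ga) = (t2 - t1) * (ga - al * (t1 * t2))"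
    by (simp add: power2_eq_square algebra_simps)
  have "t1 * t2 < 0" using assms by (simp add: mult_neg_pos)
  hence "al * (t1 * t2) < 0" using assms by (simp add: mult_pos_neg)
  hence "(t2 - t1) * (ga - al * (t1 * t2)) > 0" using assms by simp
  thus False using a b id by linarith
qed

lemma slemma:
  fixes M Q :: "real^'n^'n"
  assumes sM: "transpose M = M" and sQ: "transpose Q = Q" and ex: "x0 \<bullet> (Q *v x0) < 0"
   and h: "\<And>x. x \<bullet> (Q *v x) \<le> 0 \<Longrightarrow> x \<bullet> (M *v x) \<le> 0"
  shows "\<exists>\<mu>\<ge>0. \<forall>x. x \<bullet> (M *v x) \<le> \<mu> * (x \<bullet> (Q *v x))"
proof -
  define g where "g x = x \<bullet> (Q *v x)" for x
  define F where "F x = x \<bullet> (M *v x)" for x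
  have key: "F y / g y \<le> F x / g x" if gx: "g x < 0" and gy: "g y > 0" for x y
  proof (rule ccontr)
    assume "\<not> F y / g y \<le> F x / g x"
    hence lt: "F x / g x < F y / g y" by simp
    define l where "l = (F x / g x + F y / g y) / 2"
    have hl: "\<And>p q::real. p < q \<Longrightarrow> p < (p + q) / 2 \<and> (p + q) / 2 < q" by auto
    have l1: "F x / g x < l" using hl[OF lt] unfolding l_def by blast
    have l2: "l < F y / g y" using hl[OF lt] unfolding l_def by blast
    have Hx: "F x - l * g x > 0"
    proof -
      have "l * g x < F x" using l1 gx by (simp add: divide_less_eq)
      thus ?thesis by simp
    qed
    have Hy: "F y - l * g y > 0"
    proof -
      have "l * g y < F y" using l2 gy by (simp add: less_divide_eq)
      thus ?thesis by simp
    qed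
    define H where "H = M - l *\<^sub>R Q"
    have sH: "transpose H = H" unfolding H_def using sM sQ
      by (simp add: transpose_def vec_eq_iff)
    have qH: "z \<bullet> (H *v z) = F z - l * g z" for z
      unfolding H_def F_def g_def by (simp add: diff_scale_mv inner_diff_right)
    define a where "a = g y"
    define b where "b = x \<bullet> (Q *v y)"
    define c where "c = g x"
    define D where "D = b^2 - a * c"
    have "a * c < 0" unfolding a_def c_def using gx gy by (simp add: mult_pos_neg)
    hence Dpos: "D > b^2" unfolding D_def by simp
    define s where "s = sqrt D"
    have s2: "s^2 = D" unfolding s_def using Dpos
      by (metis le_less_trans real_sqrt_pow2 zero_le_power2 less_imp_le)
    have D0: "0 \<le> D" using Dpos by (smt (verit) zero_le_power2)
    have s0: "s \<ge> 0" unfolding s_def using D0 by simp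
    have sb: "s > \<bar>b\<bar>"
    proof -
      have "\<bar>b\<bar>^2 < s^2" using s2 Dpos by simp
      thus ?thesis using s0 by (meson abs_ge_zero power_less_imp_less_base)
    qed
    have apos: "a > 0" unfolding a_def using gy .
    define t1 where "t1 = (- b - s) / a"
    define t2 where "t2 = (- b + s) / a"
    have t1n: "t1 < 0" unfolding t1_def using apos sb by (simp add: divide_neg_pos) 
    have t2p: "t2 > 0" unfolding t2_def using apos sb by simp
    have gline: "g (x + t *\<^sub>R y) = c + 2 * t * b + t^2 * a" for t
      unfolding g_def c_def b_def a_def using qf_expand[OF sQ] by simp
    have z1: "c + 2 * t1 * b + t1^2 * a = 0"
      unfolding t1_def using apos s2 unfolding D_def
      by (simp add: field_simps power2_eq_square) (metis distrib_left)
    have z2: "c + 2 * t2 * b + t2^2 * a = 0"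
      unfolding t2_def using apos s2 unfolding D_def
      by (simp add: field_simps power2_eq_square) (metis distrib_left)
    have hline: "(x + t *\<^sub>R y) \<bullet> (H *v (x + t *\<^sub>R y)) = (F x - l * g x) + 2 * t * (x \<bullet> (H *v y)) + t^2 * (F y - l * g y)" for t
      using qf_expand[OF sH] qH by simp
    have n1: "(x + t1 *\<^sub>R y) \<bullet> (H *v (x + t1 *\<^sub>R y)) \<le> 0"
      using qH[of "x + t1 *\<^sub>R y"] gline[of t1] z1 h[of "x + t1 *\<^sub>R y"] unfolding F_def g_def by simp
    have n2: "(x + t2 *\<^sub>R y) \<bullet> (H *v (x + t2 *\<^sub>R y)) \<le> 0"
      using qH[of "x + t2 *\<^sub>R y"] gline[of t2] z2 h[of "x + t2 *\<^sub>R y"] unfolding F_def g_def by simp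
    show False
      using quad_contra[OF Hy Hx t1n t2p n1[unfolded hline] n2[unfolded hline]] .
  qed
  define S where "S = {F x / g x | x. g x < 0}"
  have Sne: "S \<noteq> {}" unfolding S_def using ex g_def by auto
  have Slow: "\<And>z. z \<in> S \<Longrightarrow> 0 \<le> z"
  proof -
    fix z assume "z \<in> S"
    then obtain x where z: "z = F x / g x" and gx: "g x < 0" unfolding S_def by auto
    have "F x \<le> 0" using h[of x] gx unfolding F_def g_def by simp
    thus "0 \<le> z" using z gx by (simp add: divide_nonpos_neg)
  qed
  have bdd: "bdd_below S" using Slow by (meson bdd_below.I)
  define \<mu> where "\<mu> = Inf S"
  have mu0: "\<mu> \<ge> 0" unfolding \<mu>_def using Sne Slow by (simp add: cInf_greatest)
  have "\<forall>x. F x \<le> \<mu> * g x"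
  proof
    fix x
    consider "g x < 0" | "g x = 0" | "g x > 0" by linarith
    thus "F x \<le> \<mu> * g x"
    proof cases
      case 1
      have "F x / g x \<in> S" unfolding S_def using 1 by auto
      hence "\<mu> \<le> F x / g x" unfolding \<mu>_def using bdd by (simp add: cInf_lower)
      thus ?thesis using 1 by (simp add: le_divide_eq)
    next
      case 2
      thus ?thesis using h[of x] unfolding F_def g_def by simp
    next
      case 3
      have "F x / g x \<le> \<mu>" unfolding \<mu>_def
        by (rule cInf_greatest[OF Sne]) (auto simp: S_def intro: key[OF _ 3])
      thus ?thesis using 3 by (simp add: divide_le_eq)
    qed
  qed
  thus ?thesis using mu0 unfolding F_def g_def by blast
qed


lemma orth_expand:
  fixes u :: "'n::finite \<Rightarrow> real^'n"
  assumes orth: "\<And>i j. u i \<bullet> u j = (if i = j then 1 else 0)"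
  shows "y = (\<Sum>i\<in>UNIV. (y \<bullet> u i) *\<^sub>R u i)"
proof -
  have inj: "inj u"
  proof (rule injI)
    fix i j assume "u i = u j"
    hence "u i \<bullet> u j = 1" using orth[of j j] by simp
    thus "i = j" using orth[of i j] by (metis zero_neq_one)
  qed
  have po: "pairwise orthogonal (range u)"
    unfolding pairwise_def orthogonal_def using orth by auto
  have n0: "0 \<notin> range u" using orth by (metis imageE inner_zero_left zero_neq_one)
  have ind: "independent (range u)" by (rule pairwise_orthogonal_independent[OF po n0])
  have card: "card (range u) = CARD('n)" using inj by (simp add: card_image)
  have "dim (UNIV :: (real^'n) set) \<le> card (range u)" using card by simp
  hence sp: "UNIV \<subseteq> span (range u)" using card_ge_dim_independent[OF _ ind] by blast
  define z where "z = y - (\<Sum>i\<in>UNIV. (y \<bullet> u i) *\<^sub>R u i)"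
  have zu: "z \<bullet> u j = 0" for j
  proof -
    have "(\<Sum>i\<in>UNIV. (y \<bullet> u i) *\<^sub>R u i) \<bullet> u j = (\<Sum>i\<in>UNIV. (y \<bullet> u i) * (u i \<bullet> u j))"
      by (simp add: inner_sum_left)
    also have "\<dots> = (\<Sum>i\<in>UNIV. if i = j then y \<bullet> u i else 0)" by (rule sum.cong) (auto simp: orth)
    also have "\<dots> = y \<bullet> u j" by simp
    finally show ?thesis unfolding z_def by (simp add: inner_diff_left)
  qed
  have "orthogonal z z"
    by (rule orthogonal_to_span[of z "range u"]) (use sp zu in \<open>auto simp: orthogonal_def\<close>)
  hence "z = 0" by (simp add: orthogonal_def)
  thus ?thesis unfolding z_def by simp
qed


locale eigsetup =
  fixes Q :: "real^'n::finite^'n" and u :: "'n \<Rightarrow> real^'n" and lam :: "'n \<Rightarrow> real" and k :: 'n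
  assumes symQ: "transpose Q = Q"
    and invQ: "invertible Q"
    and orth: "\<And>i j. u i \<bullet> u j = (if i = j then 1 else 0)"
    and eig: "\<And>i. Q *v u i = lam i *s u i"
    and neg: "lam k < 0"
    and pos: "\<And>i. i \<noteq> k \<Longrightarrow> lam i > 0"
begin

lemma eigR: "Q *v u i = lam i *\<^sub>R u i" using eig by (simp add: scalar_mult_eq_scaleR)

lemma lam_nz: "lam i \<noteq> 0" using neg pos by (cases "i = k") (auto, fastforce)

lemma Qsym_inner: "x \<bullet> (Q *v y) = y \<bullet> (Q *v x)"
  by (metis dot_lmul_matrix inner_commute symQ transpose_matrix_vector)

lemma Qu: "(Q *v y) \<bullet> u j = lam j * (y \<bullet> u j)"
  by (metis Qsym_inner eigR inner_commute inner_scaleR_right)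

lemma inner_coord: "x \<bullet> y = (\<Sum>i\<in>UNIV. (x \<bullet> u i) * (y \<bullet> u i))"
proof -
  have "x \<bullet> y = (\<Sum>i\<in>UNIV. (x \<bullet> u i) *\<^sub>R u i) \<bullet> y" using orth_expand[OF orth, of x] by simp
  also have "\<dots> = (\<Sum>i\<in>UNIV. (x \<bullet> u i) * (y \<bullet> u i))" by (simp add: inner_sum_left inner_sum_right inner_commute[of _ y])
  finally show ?thesis .
qed

lemma g_coord: "x \<bullet> (Q *v x) = (\<Sum>i\<in>UNIV. lam i * (x \<bullet> u i)^2)"
  by (subst inner_coord) (simp add: Qu power2_eq_square mult.commute mult.left_commute)

lemma Qi_u: "(matrix_inv Q *v y) \<bullet> u j = (y \<bullet> u j) / lam j"
proof -
  have "y = Q *v (matrix_inv Q *v y)" by (simp add: matrix_vector_mul_assoc matinv_right[OF invQ])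
  hence "y \<bullet> u j = lam j * ((matrix_inv Q *v y) \<bullet> u j)" by (metis Qu)
  thus ?thesis using lam_nz[of j] by simp
qed

lemma gi_coord: "y \<bullet> (matrix_inv Q *v y) = (\<Sum>i\<in>UNIV. (y \<bullet> u i)^2 / lam i)"
  by (subst inner_coord) (simp add: Qi_u power2_eq_square)

lemma coord_sum: "(\<Sum>i\<in>UNIV. e i *\<^sub>R u i) \<bullet> u j = e j"
proof -
  have "(\<Sum>i\<in>UNIV. e i *\<^sub>R u i) \<bullet> u j = (\<Sum>i\<in>UNIV. e i * (u i \<bullet> u j))" by (simp add: inner_sum_left)
  also have "\<dots> = (\<Sum>i\<in>UNIV. if i = j then e i else 0)" by (rule sum.cong) (auto simp: orth)
  finally show ?thesis by simp
qed

lemma split_k: "(\<Sum>i\<in>UNIV. f i) = f k + (\<Sum>i\<in>UNIV-{k}. f i)"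
  by (simp add: sum.remove)


lemma dual_cone:
  "(\<forall>x. x \<bullet> (Q *v x) \<le> 0 \<and> x \<bullet> u k \<ge> 0 \<longrightarrow> x \<bullet> v \<ge> 0)
   \<longleftrightarrow> (v \<bullet> u k \<ge> 0 \<and> v \<bullet> (matrix_inv Q *v v) \<le> 0)"
proof
  assume H: "\<forall>x. x \<bullet> (Q *v x) \<le> 0 \<and> x \<bullet> u k \<ge> 0 \<longrightarrow> x \<bullet> v \<ge> 0"
  have gu: "u k \<bullet> (Q *v u k) \<le> 0" using neg by (simp add: eigR orth)
  have "u k \<bullet> u k \<ge> 0" by (simp add: orth)
  hence "u k \<bullet> v \<ge> 0" using H gu by blast
  hence dk0: "v \<bullet> u k \<ge> 0" by (simp add: inner_commute)
  moreover have "v \<bullet> (matrix_inv Q *v v) \<le> 0"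
  proof (rule ccontr)
    assume "\<not> v \<bullet> (matrix_inv Q *v v) \<le> 0"
    hence tot: "0 < (\<Sum>i\<in>UNIV. (v \<bullet> u i)^2 / lam i)" by (simp add: gi_coord)
    define d where "d i = v \<bullet> u i" for i
    define R where "R = (\<Sum>i\<in>UNIV-{k}. (d i)^2 / lam i)"
    define al where "al = - lam k"
    have al0: "al > 0" using neg unfolding al_def by simp
    have "0 < (d k)^2 / lam k + R" using tot unfolding R_def d_def by (simp add: split_k[of "\<lambda>i. (v \<bullet> u i)^2 / lam i"])
    hence lt: "(d k)^2 / al < R" unfolding al_def by simp
    have "(d k)^2 / al \<ge> 0" using al0 by simp
    hence R0: "R > 0" using lt by linarith
    have aR: "(d k)^2 < al * R" using lt al0 by (simp add: divide_less_eq mult.commute)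
    define s where "s = sqrt (al / R)"
    have s2: "s^2 = al / R" unfolding s_def using al0 R0 by simp
    define e where "e i = (if i = k then 1 else - s * d i / lam i)" for i
    define x where "x = (\<Sum>i\<in>UNIV. e i *\<^sub>R u i)"
    have xc: "x \<bullet> u j = e j" for j unfolding x_def by (rule coord_sum)
    have ek: "e k = 1" unfolding e_def by simp
    have s1: "(\<Sum>i\<in>UNIV-{k}. lam i * (e i)^2) = (\<Sum>i\<in>UNIV-{k}. s^2 * ((d i)^2 / lam i))"
    proof (rule sum.cong)
      fix i assume "i \<in> UNIV - {k}"
      hence "i \<noteq> k" by simp
      thus "lam i * (e i)^2 = s^2 * ((d i)^2 / lam i)" unfolding e_def using lam_nz[of i]
        by (simp add: power2_eq_square field_simps)
    qed simp
    have "x \<bullet> (Q *v x) = lam k + s^2 * R"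
      unfolding g_coord xc split_k[of "\<lambda>i. lam i * (e i)^2"] ek s1 R_def by (simp add: sum_distrib_left)
    also have "\<dots> = 0" using s2 R0 unfolding al_def by simp
    finally have gx: "x \<bullet> (Q *v x) \<le> 0" by simp
    have s3: "(\<Sum>i\<in>UNIV-{k}. e i * d i) = (\<Sum>i\<in>UNIV-{k}. - s * ((d i)^2 / lam i))"
    proof (rule sum.cong)
      fix i assume "i \<in> UNIV - {k}"
      hence "i \<noteq> k" by simp
      thus "e i * d i = - s * ((d i)^2 / lam i)" unfolding e_def using lam_nz[of i]
        by (simp add: power2_eq_square field_simps)
    qed simp
    have xv: "x \<bullet> v = d k - s * R"
      unfolding inner_coord[of x v] xc split_k[of "\<lambda>i. e i * (v \<bullet> u i)"] ek
      using s3 unfolding d_def R_def by (simp add: sum_distrib_left sum_negf)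
    have "s * R = sqrt (al * R)"
    proof -
      have "s * R = sqrt (al / R) * sqrt (R^2)" unfolding s_def using R0 by simp
      also have "\<dots> = sqrt (al / R * R^2)" by (rule real_sqrt_mult[symmetric])
      also have "al / R * R^2 = al * R" using R0 by (simp add: power2_eq_square)
      finally show ?thesis .
    qed
    moreover have "d k < sqrt (al * R)"
    proof -
      have "d k \<le> sqrt ((d k)^2)" by simp
      also have "\<dots> < sqrt (al * R)" using real_sqrt_less_mono[OF aR] by simp
      finally show ?thesis .
    qed
    ultimately have "x \<bullet> v < 0" using xv by simp
    moreover have "x \<bullet> v \<ge> 0" using H gx xc ek by simp
    ultimately show False by simp
  qed
  ultimately show "v \<bullet> u k \<ge> 0 \<and> v \<bullet> (matrix_inv Q *v v) \<le> 0" by simp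
next
  assume A: "v \<bullet> u k \<ge> 0 \<and> v \<bullet> (matrix_inv Q *v v) \<le> 0"
  show "\<forall>x. x \<bullet> (Q *v x) \<le> 0 \<and> x \<bullet> u k \<ge> 0 \<longrightarrow> x \<bullet> v \<ge> 0"
  proof (intro allI impI)
    fix x assume X: "x \<bullet> (Q *v x) \<le> 0 \<and> x \<bullet> u k \<ge> 0"
    define c where "c i = x \<bullet> u i" for i
    define d where "d i = v \<bullet> u i" for i
    define P where "P = (\<Sum>i\<in>UNIV-{k}. lam i * (c i)^2)"
    define R where "R = (\<Sum>i\<in>UNIV-{k}. (d i)^2 / lam i)"
    define T where "T = (\<Sum>i\<in>UNIV-{k}. c i * d i)"
    define al where "al = - lam k"
    have al0: "al > 0" using neg unfolding al_def by simp
    have hx: "lam k * (c k)^2 + P \<le> 0" using X unfolding g_coord P_def c_def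
      by (simp add: split_k[of "\<lambda>i. lam i * (x \<bullet> u i)^2"])
    have hv: "(d k)^2 / lam k + R \<le> 0" using A unfolding gi_coord R_def d_def
      by (simp add: split_k[of "\<lambda>i. (v \<bullet> u i)^2 / lam i"])
    have ck: "c k \<ge> 0" using X unfolding c_def by simp
    have dk: "d k \<ge> 0" using A unfolding d_def by simp
    have P0: "P \<ge> 0" unfolding P_def using pos by (intro sum_nonneg) (simp add: less_imp_le)
    have R0: "R \<ge> 0" unfolding R_def using pos by (intro sum_nonneg) (simp add: less_imp_le)
    have Pb: "P \<le> al * (c k)^2" using hx unfolding al_def by simp
    have Rb: "R \<le> (d k)^2 / al" using hv unfolding al_def by simp
    define a where "a i = sqrt (lam i) * c i" for i
    define b where "b i = d i / sqrt (lam i)" for i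
    have CS: "(\<Sum>i\<in>UNIV-{k}. a i * b i)^2 \<le> (\<Sum>i\<in>UNIV-{k}. (a i)^2) * (\<Sum>i\<in>UNIV-{k}. (b i)^2)"
      by (rule Cauchy_Schwarz_ineq_sum)
    have e1: "(\<Sum>i\<in>UNIV-{k}. a i * b i) = T" unfolding T_def
    proof (rule sum.cong)
      fix i assume "i \<in> UNIV - {k}"
      hence "lam i > 0" using pos by simp
      thus "a i * b i = c i * d i" unfolding a_def b_def by simp
    qed simp
    have e2: "(\<Sum>i\<in>UNIV-{k}. (a i)^2) = P" unfolding P_def
    proof (rule sum.cong)
      fix i assume "i \<in> UNIV - {k}"
      hence "lam i > 0" using pos by simp
      thus "(a i)^2 = lam i * (c i)^2" unfolding a_def by (simp add: power_mult_distrib)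
    qed simp
    have e3: "(\<Sum>i\<in>UNIV-{k}. (b i)^2) = R" unfolding R_def
    proof (rule sum.cong)
      fix i assume "i \<in> UNIV - {k}"
      hence "lam i > 0" using pos by simp
      thus "(b i)^2 = (d i)^2 / lam i" unfolding b_def by (simp add: power_divide)
    qed simp
    have "T^2 \<le> P * R" using CS e1 e2 e3 by simp
    also have "\<dots> \<le> (al * (c k)^2) * ((d k)^2 / al)" using Pb Rb P0 R0 by (intro mult_mono) auto
    also have "\<dots> = (c k * d k)^2" using al0 by (simp add: power_mult_distrib)
    finally have "T^2 \<le> (c k * d k)^2" .
    hence "\<bar>T\<bar> \<le> c k * d k" using ck dk by (simp add: power2_le_iff_abs_le)
    moreover have "x \<bullet> v = c k * d k + T" unfolding inner_coord[of x v] T_def c_def d_def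
      by (simp add: split_k[of "\<lambda>i. (x \<bullet> u i) * (v \<bullet> u i)"])
    ultimately show "x \<bullet> v \<ge> 0" by linarith
  qed
qed

end


lemma dinv_neg: "dinvariant (A::real^'n::finite^'n) (uminus ` S) \<longleftrightarrow> dinvariant A S"
proof -
  have m: "A *v (- x) = - (A *v x)" for x
    by (simp add: matrix_vector_mult_def vec_eq_iff sum_negf)
  have im: "y \<in> uminus ` S \<longleftrightarrow> - y \<in> S" for y :: "real^'n"
    by (metis (no_types, lifting) image_iff minus_minus)
  have "(\<forall>x\<in>uminus ` S. A *v x \<in> uminus ` S) \<longleftrightarrow> (\<forall>y\<in>S. A *v (- y) \<in> uminus ` S)"
    by simp
  also have "\<dots> \<longleftrightarrow> (\<forall>y\<in>S. A *v y \<in> S)" by (simp only: m im minus_minus)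
  finally show ?thesis unfolding dinvariant_def .
qed

theorem theorem3p18:
  fixes Q A :: "real^'n^'n"
    and u :: "'n \<Rightarrow> real^'n" and lam :: "'n \<Rightarrow> real" and k :: 'n
  assumes symQ: "transpose Q = Q"
    and invQ: "invertible Q"
    and orth: "\<And>i j. u i \<bullet> u j = (if i = j then 1 else 0)"
    and eig: "\<And>i. Q *v u i = lam i *s u i"
    and neg: "lam k < 0"
    and pos: "\<And>i. i \<noteq> k \<Longrightarrow> lam i > 0"
  shows "(dinvariant A (CL Q (u k)) \<longleftrightarrow>
            (\<exists>\<mu>::real. \<mu> \<ge> 0 \<and> neg_semidef (transpose A ** Q ** A - \<mu> *\<^sub>R Q)
               \<and> u k \<bullet> (A *v u k) \<ge> 0
               \<and> u k \<bullet> ((A ** matrix_inv Q ** transpose A) *v u k) \<le> 0))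
       \<and> (dinvariant A (uminus ` CL Q (u k)) \<longleftrightarrow>
            (\<exists>\<mu>::real. \<mu> \<ge> 0 \<and> neg_semidef (transpose A ** Q ** A - \<mu> *\<^sub>R Q)
               \<and> u k \<bullet> (A *v u k) \<ge> 0
               \<and> u k \<bullet> ((A ** matrix_inv Q ** transpose A) *v u k) \<le> 0))"
proof -
  interpret E: eigsetup Q u lam k using assms by unfold_locales auto
  define v where "v = transpose A *v u k"
  define M where "M = transpose A ** Q ** A"
  have AT: "x \<bullet> (z v* A) = (A *v x) \<bullet> z" for x z
    by (metis dot_lmul_matrix inner_commute)
  have Av: "(A *v x) \<bullet> u k = x \<bullet> v" for x unfolding v_def using AT by simp
  have Mx: "x \<bullet> (M *v x) = (A *v x) \<bullet> (Q *v (A *v x))" for x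
    unfolding M_def by (simp add: matrix_vector_mul_assoc[symmetric] AT)
  have sM: "transpose M = M"
  proof -
    have "transpose M = transpose A ** transpose (transpose A ** Q)" unfolding M_def by (rule matrix_transpose_mul)
    also have "\<dots> = transpose A ** (transpose Q ** A)" by (simp only: matrix_transpose_mul transpose_transpose)
    also have "\<dots> = M" unfolding M_def by (simp only: symQ matrix_mul_assoc)
    finally show ?thesis .
  qed
  have nsd: "neg_semidef (M - \<mu> *\<^sub>R Q) \<longleftrightarrow> (\<forall>x. x \<bullet> (M *v x) \<le> \<mu> * (x \<bullet> (Q *v x)))" for \<mu>
    unfolding neg_semidef_def by (simp add: diff_scale_mv inner_diff_right)
  have c2: "u k \<bullet> (A *v u k) = v \<bullet> u k" using Av[of "u k"] by (simp add: inner_commute)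
  have c3: "u k \<bullet> ((A ** matrix_inv Q ** transpose A) *v u k) = v \<bullet> (matrix_inv Q *v v)"
  proof -
    have "(A ** matrix_inv Q ** transpose A) *v u k = A *v (matrix_inv Q *v v)"
      unfolding v_def by (simp only: matrix_vector_mul_assoc matrix_mul_assoc)
    thus ?thesis using Av[of "matrix_inv Q *v v"] by (simp add: inner_commute)
  qed
  have CLm: "x \<in> CL Q (u k) \<longleftrightarrow> x \<bullet> (Q *v x) \<le> 0 \<and> x \<bullet> u k \<ge> 0" for x
  proof -
    have "x \<bullet> (Q *v u k) = lam k * (x \<bullet> u k)" by (simp add: E.eigR)
    moreover have "lam k * t \<le> 0 \<longleftrightarrow> t \<ge> 0" for t using neg by (simp add: mult_le_0_iff)
    ultimately show ?thesis unfolding CL_def by simp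
  qed
  have inv_iff: "dinvariant A (CL Q (u k)) \<longleftrightarrow>
      (\<forall>x. x \<bullet> (Q *v x) \<le> 0 \<and> x \<bullet> u k \<ge> 0 \<longrightarrow> x \<bullet> (M *v x) \<le> 0 \<and> x \<bullet> v \<ge> 0)"
    unfolding dinvariant_def Ball_def CLm Mx Av by blast
  have main: "dinvariant A (CL Q (u k)) \<longleftrightarrow>
      (\<exists>\<mu>\<ge>0. \<forall>x. x \<bullet> (M *v x) \<le> \<mu> * (x \<bullet> (Q *v x))) \<and> v \<bullet> u k \<ge> 0 \<and> v \<bullet> (matrix_inv Q *v v) \<le> 0"
  proof
    assume I: "dinvariant A (CL Q (u k))"
    have II: "x \<bullet> (M *v x) \<le> 0 \<and> x \<bullet> v \<ge> 0" if "x \<bullet> (Q *v x) \<le> 0" "x \<bullet> u k \<ge> 0" for x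
      using I that unfolding inv_iff by blast
    have cone: "\<forall>x. x \<bullet> (Q *v x) \<le> 0 \<and> x \<bullet> u k \<ge> 0 \<longrightarrow> x \<bullet> v \<ge> 0" using II by blast
    have h: "x \<bullet> (M *v x) \<le> 0" if gx: "x \<bullet> (Q *v x) \<le> 0" for x
    proof (cases "x \<bullet> u k \<ge> 0")
      case True thus ?thesis using II[OF gx True] by simp
    next
      case False
      have m: "B *v (- y) = - (B *v y)" for B :: "real^'n^'n" and y
        by (simp add: matrix_vector_mult_def vec_eq_iff sum_negf)
      have a1: "(- x) \<bullet> (Q *v (- x)) \<le> 0" using gx by (simp add: m)
      have a2: "(- x) \<bullet> u k \<ge> 0" using False by simp
      have "(- x) \<bullet> (M *v (- x)) \<le> 0" using II[OF a1 a2] by simp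
      thus ?thesis by (simp add: m)
    qed
    have gu: "u k \<bullet> (Q *v u k) < 0" using neg by (simp add: E.eigR orth)
    have S1: "\<exists>\<mu>\<ge>0. \<forall>x. x \<bullet> (M *v x) \<le> \<mu> * (x \<bullet> (Q *v x))" by (rule slemma[OF sM symQ gu h])
    have S2: "v \<bullet> u k \<ge> 0 \<and> v \<bullet> (matrix_inv Q *v v) \<le> 0" using E.dual_cone[of v] cone by (rule iffD1)
    show "(\<exists>\<mu>\<ge>0. \<forall>x. x \<bullet> (M *v x) \<le> \<mu> * (x \<bullet> (Q *v x))) \<and> v \<bullet> u k \<ge> 0 \<and> v \<bullet> (matrix_inv Q *v v) \<le> 0"
      using S1 S2 by (rule conjI)
  next
    assume R: "(\<exists>\<mu>\<ge>0. \<forall>x. x \<bullet> (M *v x) \<le> \<mu> * (x \<bullet> (Q *v x))) \<and> v \<bullet> u k \<ge> 0 \<and> v \<bullet> (matrix_inv Q *v v) \<le> 0"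
    then obtain \<mu> where mu0: "\<mu> \<ge> 0" and Fm: "\<forall>x. x \<bullet> (M *v x) \<le> \<mu> * (x \<bullet> (Q *v x))" by blast
    have cone: "\<forall>x. x \<bullet> (Q *v x) \<le> 0 \<and> x \<bullet> u k \<ge> 0 \<longrightarrow> x \<bullet> v \<ge> 0"
      using E.dual_cone[of v] R[THEN conjunct2] by (rule iffD2)
    have FF: "x \<bullet> (M *v x) \<le> 0" if "x \<bullet> (Q *v x) \<le> 0" for x
    proof -
      have "\<mu> * (x \<bullet> (Q *v x)) \<le> 0" using mu0 that by (simp add: mult_nonneg_nonpos)
      thus ?thesis using Fm by (meson order_trans)
    qed
    show "dinvariant A (CL Q (u k))" unfolding inv_iff
    proof (intro allI impI conjI)
      fix x assume "x \<bullet> (Q *v x) \<le> 0 \<and> x \<bullet> u k \<ge> 0"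
      thus "x \<bullet> (M *v x) \<le> 0" "x \<bullet> v \<ge> 0" using FF cone by auto
    qed
  qed
  have rhs: "(\<exists>\<mu>::real. \<mu> \<ge> 0 \<and> neg_semidef (transpose A ** Q ** A - \<mu> *\<^sub>R Q)
               \<and> u k \<bullet> (A *v u k) \<ge> 0
               \<and> u k \<bullet> ((A ** matrix_inv Q ** transpose A) *v u k) \<le> 0)
     \<longleftrightarrow> (\<exists>\<mu>\<ge>0. \<forall>x. x \<bullet> (M *v x) \<le> \<mu> * (x \<bullet> (Q *v x))) \<and> v \<bullet> u k \<ge> 0 \<and> v \<bullet> (matrix_inv Q *v v) \<le> 0"
    unfolding c2 c3 M_def[symmetric] nsd by blast
  show ?thesis unfolding dinv_neg rhs main by simp
qed

end
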